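(* Let $G$ be a finite Weetman graph and let $v_0\in V(G)$. Then the cluster graph $\mathcal{C}(G)$ of $G$ with respect to $v_0$ is a tree.
   Context: All graphs are simple and connected; $d$ is graph distance and $\mathrm{pred}_{v_0}(v)=\{u : uv\in E(G),\ d(v_0,u)=d(v_0,v)-1\}$. $G$ is Weetman if for every vertex $v_0$: (Triangle Condition) for every two adjacent vertices $v,v'$ with $d(v_0,v)=d(v_0,v')=k$, there is $u$ with $d(v_0,u)=k-1$ and $uv,uv'\in E(G)$; (Interval Condition) for every vertex $v$, the subgraph induced by $\mathrm{pred}_{v_0}(v)$ is connected. For $i\ge0$ let $S^i=\{v: d(v_0,v)=i\}$. The clusters with respect to $v_0$ are the vertex sets of the connected components of the induced subgraphs $G[S^i]$, $i\ge 0$. The cluster graph $\mathcal{C}(G)$ has the clusters as vertices, two distinct clusters $C,C'$ being adjacent iff some $v\in C$, $v'\in C'$ satisfy $vv'\in E(G)$. *)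

theory Defs
  imports Main
begin

definition simple_graph :: "'a set \<Rightarrow> ('a \<Rightarrow> 'a \<Rightarrow> bool) \<Rightarrow> bool" where
  "simple_graph V E \<longleftrightarrow>
     (\<forall>u v. E u v \<longrightarrow> u \<in> V \<and> v \<in> V) \<and>
     (\<forall>u v. E u v \<longrightarrow> E v u) \<and> (\<forall>v. \<not> E v v)"

definition is_walk :: "('a \<Rightarrow> 'a \<Rightarrow> bool) \<Rightarrow> 'a list \<Rightarrow> bool" where
  "is_walk E xs \<longleftrightarrow> xs \<noteq> [] \<and> (\<forall>i. Suc i < length xs \<longrightarrow> E (xs ! i) (xs ! Suc i))"

definition reach_in :: "('a \<Rightarrow> 'a \<Rightarrow> bool) \<Rightarrow> 'a set \<Rightarrow> 'a \<Rightarrow> 'a \<Rightarrow> bool" where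
  "reach_in E S u v \<longleftrightarrow>
     (\<exists>xs. is_walk E xs \<and> set xs \<subseteq> S \<and> hd xs = u \<and> last xs = v)"

(* the induced subgraph G[S] is connected (vacuously true for S = {}) *)
definition connected_on :: "('a \<Rightarrow> 'a \<Rightarrow> bool) \<Rightarrow> 'a set \<Rightarrow> bool" where
  "connected_on E S \<longleftrightarrow> (\<forall>u\<in>S. \<forall>v\<in>S. reach_in E S u v)"

definition connected_graph :: "'a set \<Rightarrow> ('a \<Rightarrow> 'a \<Rightarrow> bool) \<Rightarrow> bool" where
  "connected_graph V E \<longleftrightarrow> V \<noteq> {} \<and> connected_on E V"

definition gdist :: "'a set \<Rightarrow> ('a \<Rightarrow> 'a \<Rightarrow> bool) \<Rightarrow> 'a \<Rightarrow> 'a \<Rightarrow> nat" where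
  "gdist V E u v = (LEAST n. \<exists>xs. is_walk E xs \<and> set xs \<subseteq> V \<and> hd xs = u \<and> last xs = v
                                   \<and> length xs = Suc n)"

definition pred_set :: "'a set \<Rightarrow> ('a \<Rightarrow> 'a \<Rightarrow> bool) \<Rightarrow> 'a \<Rightarrow> 'a \<Rightarrow> 'a set" where
  "pred_set V E v0 v = {u \<in> V. E u v \<and> gdist V E v0 u + 1 = gdist V E v0 v}"

definition triangle_condition :: "'a set \<Rightarrow> ('a \<Rightarrow> 'a \<Rightarrow> bool) \<Rightarrow> 'a \<Rightarrow> bool" where
  "triangle_condition V E v0 \<longleftrightarrow>
     (\<forall>v\<in>V. \<forall>v'\<in>V. E v v' \<and> gdist V E v0 v = gdist V E v0 v' \<longrightarrow>
        (\<exists>u\<in>V. gdist V E v0 u + 1 = gdist V E v0 v \<and> E u v \<and> E u v'))"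

definition interval_condition :: "'a set \<Rightarrow> ('a \<Rightarrow> 'a \<Rightarrow> bool) \<Rightarrow> 'a \<Rightarrow> bool" where
  "interval_condition V E v0 \<longleftrightarrow> (\<forall>v\<in>V. connected_on E (pred_set V E v0 v))"

definition weetman :: "'a set \<Rightarrow> ('a \<Rightarrow> 'a \<Rightarrow> bool) \<Rightarrow> bool" where
  "weetman V E \<longleftrightarrow> (\<forall>v0\<in>V. triangle_condition V E v0 \<and> interval_condition V E v0)"

definition sphere :: "'a set \<Rightarrow> ('a \<Rightarrow> 'a \<Rightarrow> bool) \<Rightarrow> 'a \<Rightarrow> nat \<Rightarrow> 'a set" where
  "sphere V E v0 i = {v \<in> V. gdist V E v0 v = i}"

definition components_of :: "('a \<Rightarrow> 'a \<Rightarrow> bool) \<Rightarrow> 'a set \<Rightarrow> 'a set set" where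
  "components_of E S = {{w \<in> S. reach_in E S x w} | x. x \<in> S}"

definition clusters :: "'a set \<Rightarrow> ('a \<Rightarrow> 'a \<Rightarrow> bool) \<Rightarrow> 'a \<Rightarrow> 'a set set" where
  "clusters V E v0 = (\<Union>i. components_of E (sphere V E v0 i))"

definition cluster_adj :: "('a \<Rightarrow> 'a \<Rightarrow> bool) \<Rightarrow> 'a set \<Rightarrow> 'a set \<Rightarrow> bool" where
  "cluster_adj E C C' \<longleftrightarrow> C \<noteq> C' \<and> (\<exists>v\<in>C. \<exists>v'\<in>C'. E v v')"

definition has_cycle :: "'b set \<Rightarrow> ('b \<Rightarrow> 'b \<Rightarrow> bool) \<Rightarrow> bool" where
  "has_cycle V E \<longleftrightarrow> (\<exists>xs. length xs \<ge> 3 \<and> distinct xs \<and> set xs \<subseteq> V \<and> is_walk E xs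
                           \<and> E (last xs) (hd xs))"

definition is_tree :: "'b set \<Rightarrow> ('b \<Rightarrow> 'b \<Rightarrow> bool) \<Rightarrow> bool" where
  "is_tree V E \<longleftrightarrow> connected_graph V E \<and> \<not> has_cycle V E"

end

theory Submission imports Defs begin

lemma walk_single[simp]: "is_walk E [x]"
  by (simp add: is_walk_def)

lemma walk_snoc: "is_walk E (xs @ [y]) \<longleftrightarrow> xs = [] \<or> (is_walk E xs \<and> E (last xs) y)"
proof (cases "xs = []")
  case True then show ?thesis by simp
next
  case False
  show ?thesis
  proof
    assume w: "is_walk E (xs @ [y])"
    have "is_walk E xs" unfolding is_walk_def
    proof (intro conjI allI impI)
      show "xs \<noteq> []" by fact
      fix i assume "Suc i < length xs"
      with w show "E (xs ! i) (xs ! Suc i)" unfolding is_walk_def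
        by (metis Suc_lessD length_append_singleton less_SucI nth_append)
    qed
    moreover have "E (last xs) y"
    proof -
      have A: "\<forall>i. Suc i < length (xs@[y]) \<longrightarrow> E ((xs@[y]) ! i) ((xs@[y]) ! Suc i)"
        using w unfolding is_walk_def by blast
      have "Suc (length xs - 1) < length (xs@[y])" using False by simp
      from A[rule_format, OF this]
      have "E ((xs@[y]) ! (length xs - 1)) ((xs@[y]) ! Suc (length xs - 1))" .
      then show ?thesis using False by (simp add: nth_append last_conv_nth)
    qed
    ultimately show "xs = [] \<or> (is_walk E xs \<and> E (last xs) y)" by simp
  next
    assume "xs = [] \<or> (is_walk E xs \<and> E (last xs) y)"
    with False have w: "is_walk E xs" and e: "E (last xs) y" by auto
    show "is_walk E (xs @ [y])" unfolding is_walk_def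
    proof (intro conjI allI impI)
      show "xs @ [y] \<noteq> []" by simp
      fix i assume i: "Suc i < length (xs @ [y])"
      show "E ((xs @ [y]) ! i) ((xs @ [y]) ! Suc i)"
      proof (cases "Suc i < length xs")
        case True then show ?thesis using w by (simp add: nth_append is_walk_def)
      next
        case False2: False
        with i have "i = length xs - 1" by simp
        then show ?thesis using e False by (simp add: nth_append last_conv_nth)
      qed
    qed
  qed
qed

lemma reach_iff: "reach_in E S u v \<longleftrightarrow> u \<in> S \<and> (\<lambda>a b. E a b \<and> a \<in> S \<and> b \<in> S)\<^sup>*\<^sup>* u v"
proof
  assume "reach_in E S u v"
  then obtain xs where xs: "is_walk E xs" "set xs \<subseteq> S" "hd xs = u" "last xs = v"
    unfolding reach_in_def by blast
  have "\<forall>v. is_walk E xs \<and> set xs \<subseteq> S \<and> hd xs = u \<and> last xs = v \<longrightarrow>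
      (\<lambda>a b. E a b \<and> a \<in> S \<and> b \<in> S)\<^sup>*\<^sup>* u v"
  proof (induction xs rule: rev_induct)
    case Nil then show ?case by (simp add: is_walk_def)
  next
    case (snoc y ys)
    show ?case
    proof (intro allI impI)
      fix v assume h: "is_walk E (ys @ [y]) \<and> set (ys @ [y]) \<subseteq> S \<and> hd (ys @ [y]) = u \<and> last (ys @ [y]) = v"
      show "(\<lambda>a b. E a b \<and> a \<in> S \<and> b \<in> S)\<^sup>*\<^sup>* u v"
      proof (cases "ys = []")
        case True then show ?thesis using h by auto
      next
        case False
        with h have "is_walk E ys" "E (last ys) y" by (auto simp: walk_snoc)
        moreover have "last ys \<in> S" using h False by auto
        ultimately show ?thesis using snoc.IH h False
          by (auto intro: rtranclp.rtrancl_into_rtrancl)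
      qed
    qed
  qed
  moreover have "u \<in> S" using xs by (metis hd_in_set is_walk_def subsetD)
  ultimately show "u \<in> S \<and> (\<lambda>a b. E a b \<and> a \<in> S \<and> b \<in> S)\<^sup>*\<^sup>* u v" using xs by blast
next
  assume h: "u \<in> S \<and> (\<lambda>a b. E a b \<and> a \<in> S \<and> b \<in> S)\<^sup>*\<^sup>* u v"
  then have "(\<lambda>a b. E a b \<and> a \<in> S \<and> b \<in> S)\<^sup>*\<^sup>* u v" by blast
  then have "\<exists>xs. is_walk E xs \<and> set xs \<subseteq> S \<and> hd xs = u \<and> last xs = v"
  proof induction
    case base then show ?case using h by (intro exI[of _ "[u]"]) simp
  next
    case (step b c)
    then obtain xs where xs: "is_walk E xs \<and> set xs \<subseteq> S \<and> hd xs = u \<and> last xs = b" by blast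
    then have "xs \<noteq> []" by (simp add: is_walk_def)
    with xs step show ?case
      by (intro exI[of _ "xs @ [c]"]) (auto simp: walk_snoc)
  qed
  then show "reach_in E S u v" by (simp add: reach_in_def)
qed

lemma rtranclp_sym: assumes s: "\<And>a b. r a b \<Longrightarrow> r b a" and h: "r\<^sup>*\<^sup>* a b" shows "r\<^sup>*\<^sup>* b a"
  using h by (induction rule: rtranclp.induct) (auto intro: converse_rtranclp_into_rtranclp s)

definition walkn :: "'a set \<Rightarrow> ('a \<Rightarrow> 'a \<Rightarrow> bool) \<Rightarrow> 'a \<Rightarrow> nat \<Rightarrow> 'a \<Rightarrow> bool" where
  "walkn V E u n v \<longleftrightarrow> (\<exists>xs. is_walk E xs \<and> set xs \<subseteq> V \<and> hd xs = u \<and> last xs = v \<and> length xs = Suc n)"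

lemma gdist_walkn: "gdist V E u v = (LEAST n. walkn V E u n v)"
  by (simp add: gdist_def walkn_def)

lemma walkn_0: "walkn V E u 0 v \<longleftrightarrow> u \<in> V \<and> v = u"
proof
  assume "walkn V E u 0 v"
  then obtain xs where "is_walk E xs \<and> set xs \<subseteq> V \<and> hd xs = u \<and> last xs = v \<and> length xs = 1"
    unfolding walkn_def by auto
  then show "u \<in> V \<and> v = u" by (cases xs) auto
next
  assume "u \<in> V \<and> v = u"
  then show "walkn V E u 0 v" unfolding walkn_def by (intro exI[of _ "[u]"]) simp
qed

lemma walkn_Suc: "walkn V E u (Suc n) v \<longleftrightarrow> (\<exists>w. walkn V E u n w \<and> E w v \<and> v \<in> V)"
proof
  assume "walkn V E u (Suc n) v"
  then obtain xs where xs: "is_walk E xs" "set xs \<subseteq> V" "hd xs = u" "last xs = v" "length xs = Suc (Suc n)"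
    unfolding walkn_def by blast
  then obtain ys y where ys: "xs = ys @ [y]" by (metis rev_exhaust list.size(3) nat.distinct(1))
  with xs have ne: "ys \<noteq> []" by auto
  with xs ys have "is_walk E ys" "E (last ys) y" by (auto simp: walk_snoc)
  moreover have "walkn V E u n (last ys)" unfolding walkn_def
    using xs ys ne \<open>is_walk E ys\<close> by (intro exI[of _ ys]) auto
  ultimately show "\<exists>w. walkn V E u n w \<and> E w v \<and> v \<in> V" using xs ys by auto
next
  assume "\<exists>w. walkn V E u n w \<and> E w v \<and> v \<in> V"
  then obtain w xs where "is_walk E xs" "set xs \<subseteq> V" "hd xs = u" "last xs = w" "length xs = Suc n" "E w v" "v \<in> V"
    unfolding walkn_def by blast
  moreover then have "xs \<noteq> []" by (simp add: is_walk_def)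
  ultimately show "walkn V E u (Suc n) v" unfolding walkn_def
    by (intro exI[of _ "xs @ [v]"]) (auto simp: walk_snoc)
qed

lemma walkn_in: "walkn V E u n v \<Longrightarrow> v \<in> V"
  by (induction n arbitrary: v) (auto simp: walkn_0 walkn_Suc)

lemma reach_walkn: "reach_in E V u v \<Longrightarrow> \<exists>n. walkn V E u n v"
  unfolding reach_in_def walkn_def
  by (metis Suc_pred is_walk_def length_greater_0_conv)

locale WG =
  fixes V :: "'a set" and E :: "'a \<Rightarrow> 'a \<Rightarrow> bool" and v0 :: 'a
  assumes sg: "simple_graph V E" and cg: "connected_graph V E" and wm: "weetman V E"
    and v0: "v0 \<in> V"
begin

abbreviation d where "d \<equiv> gdist V E v0"

lemma EV: "E u w \<Longrightarrow> u \<in> V \<and> w \<in> V" using sg by (simp add: simple_graph_def)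
lemma Esym: "E u w \<Longrightarrow> E w u" using sg by (simp add: simple_graph_def)

lemma reachV: "x \<in> V \<Longrightarrow> reach_in E V v0 x"
  using cg v0 by (simp add: connected_graph_def connected_on_def)

lemma d_walk: "x \<in> V \<Longrightarrow> walkn V E v0 (d x) x"
  unfolding gdist_walkn using reach_walkn[OF reachV] by (rule LeastI_ex)

lemma d_le: "walkn V E v0 n x \<Longrightarrow> d x \<le> n"
  unfolding gdist_walkn by (rule Least_le)

lemma d_v0: "d v0 = 0"
  using d_le[of 0 v0] v0 by (simp add: walkn_0)

lemma d_zero: "x \<in> V \<Longrightarrow> d x = 0 \<Longrightarrow> x = v0"
  using d_walk[of x] by (simp add: walkn_0)

lemma d_edge: "E u w \<Longrightarrow> d w \<le> d u + 1"
proof -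
  assume e: "E u w"
  then have "walkn V E v0 (Suc (d u)) w" using EV d_walk by (auto simp: walkn_Suc)
  then show ?thesis using d_le by fastforce
qed

lemma d_pred: "x \<in> V \<Longrightarrow> d x = Suc k \<Longrightarrow> \<exists>u\<in>V. E u x \<and> d u = k"
proof -
  assume x: "x \<in> V" and k: "d x = Suc k"
  then obtain u where u: "walkn V E v0 k u" "E u x" using d_walk[of x] by (auto simp: walkn_Suc)
  have "d u \<le> k" using u(1) by (rule d_le)
  moreover have "d x \<le> d u + 1" using u(2) by (rule d_edge)
  ultimately show ?thesis using u k walkn_in by force
qed

definition K :: "'a \<Rightarrow> 'a set" where
  "K x = {w \<in> sphere V E v0 (d x). reach_in E (sphere V E v0 (d x)) x w}"

abbreviation Rs where "Rs i \<equiv> (\<lambda>a b. E a b \<and> a \<in> sphere V E v0 i \<and> b \<in> sphere V E v0 i)"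

lemma Rs_end: "(Rs i)\<^sup>*\<^sup>* a b \<Longrightarrow> a \<in> sphere V E v0 i \<Longrightarrow> b \<in> sphere V E v0 i"
  by (induction rule: rtranclp.induct) auto

lemma K_mem: assumes x: "x \<in> V" shows "w \<in> K x \<longleftrightarrow> (Rs (d x))\<^sup>*\<^sup>* x w"
proof -
  have xs: "x \<in> sphere V E v0 (d x)" using x by (simp add: sphere_def)
  show ?thesis unfolding K_def reach_iff mem_Collect_eq using Rs_end[OF _ xs, of w] xs by blast
qed

lemma K_d: "w \<in> K x \<Longrightarrow> w \<in> V \<and> d w = d x"
  unfolding K_def sphere_def by auto

lemma K_self: "x \<in> V \<Longrightarrow> x \<in> K x"
  by (simp add: K_mem)

lemma K_eq: assumes x: "x \<in> V" and w: "w \<in> K x" shows "K w = K x"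
proof -
  have dw: "d w = d x" "w \<in> V" using K_d[OF w] by auto
  have xw: "(Rs (d x))\<^sup>*\<^sup>* x w" using w x K_mem by blast
  have wx: "(Rs (d x))\<^sup>*\<^sup>* w x" by (rule rtranclp_sym[OF _ xw]) (auto intro: Esym)
  show ?thesis
  proof (intro set_eqI)
    fix z show "z \<in> K w \<longleftrightarrow> z \<in> K x"
      using K_mem[OF x] K_mem[OF dw(2)] dw xw wx by (auto intro: rtranclp_trans)
  qed
qed

lemma K_edge: "E x y \<Longrightarrow> d x = d y \<Longrightarrow> K x = K y"
proof -
  assume e: "E x y" and dd: "d x = d y"
  then have "y \<in> K x" using EV[OF e] K_mem by (auto simp: sphere_def)
  then show ?thesis using K_eq EV[OF e] by auto
qed

definition lev :: "'a set \<Rightarrow> nat" where "lev C = d (SOME x. x \<in> C)"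

lemma lev_K: "x \<in> V \<Longrightarrow> lev (K x) = d x"
proof -
  assume x: "x \<in> V"
  have "(SOME y. y \<in> K x) \<in> K x" by (rule someI[of _ x]) (simp add: K_self x)
  then show ?thesis unfolding lev_def using K_d by blast
qed

lemma clusters_eq: "clusters V E v0 = K ` V"
proof
  show "clusters V E v0 \<subseteq> K ` V"
  proof
    fix C assume "C \<in> clusters V E v0"
    then obtain i x where "x \<in> sphere V E v0 i" "C = {w \<in> sphere V E v0 i. reach_in E (sphere V E v0 i) x w}"
      unfolding clusters_def components_of_def by blast
    then show "C \<in> K ` V" unfolding K_def by (auto simp: sphere_def)
  qed
next
  show "K ` V \<subseteq> clusters V E v0"
  proof
    fix C assume "C \<in> K ` V"
    then obtain x where "x \<in> V" "C = K x" by blast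
    then show "C \<in> clusters V E v0"
      unfolding clusters_def components_of_def K_def by (auto simp: sphere_def)
  qed
qed

lemma adj_K: "cluster_adj E (K x) (K y) \<Longrightarrow> x \<in> V \<Longrightarrow> y \<in> V \<Longrightarrow>
   \<exists>v v'. E v v' \<and> K v = K x \<and> K v' = K y \<and> d v = d x \<and> d v' = d y \<and> v \<in> V \<and> v' \<in> V"
proof -
  assume a: "cluster_adj E (K x) (K y)" and x: "x \<in> V" and y: "y \<in> V"
  then obtain v v' where "v \<in> K x" "v' \<in> K y" "E v v'" unfolding cluster_adj_def by blast
  then show ?thesis using K_eq[OF x] K_eq[OF y] K_d by blast
qed

lemma adj_lev: assumes "C \<in> K ` V" "C' \<in> K ` V" "cluster_adj E C C'"
  shows "lev C' = lev C + 1 \<or> lev C = lev C' + 1"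
proof -
  obtain x y where xy: "x \<in> V" "y \<in> V" "C = K x" "C' = K y" using assms by blast
  then obtain v v' where vv: "E v v'" "K v = K x" "K v' = K y" "d v = d x" "d v' = d y"
    using adj_K assms by blast
  have "d v \<noteq> d v'"
  proof
    assume "d v = d v'"
    then have "K v = K v'" using K_edge vv(1) by blast
    then show False using vv xy assms(3) unfolding cluster_adj_def by simp
  qed
  moreover have "d v' \<le> d v + 1" "d v \<le> d v' + 1" using d_edge vv(1) Esym by auto
  ultimately show ?thesis using xy vv lev_K by auto
qed

lemma pred_mem: "u \<in> pred_set V E v0 w \<longleftrightarrow> u \<in> V \<and> E u w \<and> d u + 1 = d w"
  by (simp add: pred_set_def)

lemma IL: assumes w: "w \<in> V" and u: "u \<in> pred_set V E v0 w" and u': "u' \<in> pred_set V E v0 w"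
  shows "K u = K u'"
proof -
  have "connected_on E (pred_set V E v0 w)" using wm v0 w
    by (simp add: weetman_def interval_condition_def)
  then have "reach_in E (pred_set V E v0 w) u u'" using u u' by (simp add: connected_on_def)
  then have r: "(\<lambda>a b. E a b \<and> a \<in> pred_set V E v0 w \<and> b \<in> pred_set V E v0 w)\<^sup>*\<^sup>* u u'"
    by (simp add: reach_iff)
  have "(Rs (d u))\<^sup>*\<^sup>* u u'"
    apply (rule rtranclp_mono[THEN predicate2D, OF _ r])
    using u by (auto simp: pred_mem sphere_def)
  then have "u' \<in> K u" using K_mem u by (simp add: pred_mem)
  then show ?thesis using K_eq[of u u'] u by (auto simp: pred_mem)
qed

lemma parent: assumes x: "x \<in> V" and k: "d x = Suc k"
  and w: "w \<in> K x" and u: "u \<in> V" "E u w" "d u = k"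
  and w': "w' \<in> K x" and u': "u' \<in> V" "E u' w'" "d u' = k"
  shows "K u = K u'"
proof -
  obtain u0 where u0: "u0 \<in> V" "E u0 x" "d u0 = k" using d_pred x k by blast
  have main: "\<forall>u\<in>V. E u z \<and> d u = k \<longrightarrow> K u = K u0" if r: "(Rs (Suc k))\<^sup>*\<^sup>* x z" for z
    using r
  proof (induction rule: rtranclp_induct)
    case base
    show ?case
    proof (intro ballI impI)
      fix u assume "u \<in> V" "E u x \<and> d u = k"
      then show "K u = K u0" using IL[OF x, of u u0] u0 k by (simp add: pred_mem)
    qed
  next
    case (step y z)
    then have e: "E y z" and yz: "y \<in> V" "z \<in> V" "d y = Suc k" "d z = Suc k"
      by (auto simp: sphere_def)
    have "triangle_condition V E v0" using wm v0 by (simp add: weetman_def)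
    then have T: "\<forall>v\<in>V. \<forall>v'\<in>V. E v v' \<and> d v = d v' \<longrightarrow> (\<exists>u\<in>V. d u + 1 = d v \<and> E u v \<and> E u v')"
      unfolding triangle_condition_def by blast
    have "\<exists>u\<in>V. d u + 1 = d y \<and> E u y \<and> E u z"
      by (rule T[rule_format, OF yz(1) yz(2)]) (simp add: e yz)
    then obtain us where us: "us \<in> V" "d us + 1 = d y" "E us y" "E us z" by blast
    then have "K us = K u0" using step.IH yz by simp
    show ?case
    proof (intro ballI impI)
      fix u assume "u \<in> V" "E u z \<and> d u = k"
      then have "K u = K us" using IL[OF yz(2), of u us] us yz by (simp add: pred_mem)
      then show "K u = K u0" using \<open>K us = K u0\<close> by simp
    qed
  qed
  have "(Rs (Suc k))\<^sup>*\<^sup>* x w" "(Rs (Suc k))\<^sup>*\<^sup>* x w'" using K_mem[OF x] w w' k by auto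
  then have "K u = K u0" "K u' = K u0" using main u u' by blast+
  then show ?thesis by simp
qed

lemma uniq_parent: assumes "C \<in> K ` V" "C1 \<in> K ` V" "C2 \<in> K ` V"
  and a1: "cluster_adj E C C1" and a2: "cluster_adj E C C2"
  and l1: "lev C1 + 1 = lev C" and l2: "lev C2 + 1 = lev C"
  shows "C1 = C2"
proof -
  obtain x y1 y2 where xy: "x \<in> V" "y1 \<in> V" "y2 \<in> V" "C = K x" "C1 = K y1" "C2 = K y2"
    using assms by blast
  obtain v v' where vv: "E v v'" "K v = K x" "K v' = K y1" "d v = d x" "d v' = d y1" "v \<in> V" "v' \<in> V"
    using adj_K a1 xy by blast
  obtain w w' where ww: "E w w'" "K w = K x" "K w' = K y2" "d w = d x" "d w' = d y2" "w \<in> V" "w' \<in> V"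
    using adj_K a2 xy by blast
  have dx: "d x = Suc (d y1)" "d y2 = d y1" using l1 l2 xy lev_K by auto
  have "v \<in> K x" "w \<in> K x" using vv ww K_self by metis+
  then have "K v' = K w'" using parent[OF xy(1) dx(1), of v v' w w'] vv ww dx Esym by auto
  then show ?thesis using vv ww xy by simp
qed

lemma adj_sym: "cluster_adj E C C' \<Longrightarrow> cluster_adj E C' C"
  unfolding cluster_adj_def using Esym by blast

abbreviation Rc where "Rc \<equiv> (\<lambda>A B. cluster_adj E A B \<and> A \<in> K ` V \<and> B \<in> K ` V)"

lemma to_root: "x \<in> V \<Longrightarrow> Rc\<^sup>*\<^sup>* (K x) (K v0)"
proof (induction "d x" arbitrary: x)
  case 0
  then show ?case using d_zero by fastforce
next
  case (Suc k)
  obtain u where u: "u \<in> V" "E u x" "d u = k" using d_pred Suc.prems Suc.hyps(2)[symmetric] by blast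
  have "K x \<noteq> K u" using lev_K u Suc by (metis n_not_Suc_n)
  then have "cluster_adj E (K x) (K u)" unfolding cluster_adj_def
    using K_self u Suc.prems Esym by blast
  then have "Rc (K x) (K u)" using u Suc.prems by blast
  moreover have "Rc\<^sup>*\<^sup>* (K u) (K v0)" using Suc.hyps(1) u by simp
  ultimately show ?case by (rule converse_rtranclp_into_rtranclp)
qed

lemma connected_clusters: "connected_graph (K ` V) (cluster_adj E)"
  unfolding connected_graph_def connected_on_def
proof (intro conjI ballI)
  show "K ` V \<noteq> {}" using v0 by blast
  fix A B assume A: "A \<in> K ` V" and B: "B \<in> K ` V"
  then obtain x y where "x \<in> V" "y \<in> V" "A = K x" "B = K y" by blast
  then have "Rc\<^sup>*\<^sup>* A (K v0)" "Rc\<^sup>*\<^sup>* B (K v0)" using to_root by auto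
  then have "Rc\<^sup>*\<^sup>* A B"
    using rtranclp_sym[of Rc B "K v0"] adj_sym by (meson rtranclp_trans)
  then show "reach_in (cluster_adj E) (K ` V) A B" using A by (simp add: reach_iff)
qed

lemma no_cycle: "\<not> has_cycle (K ` V) (cluster_adj E)"
proof
  assume "has_cycle (K ` V) (cluster_adj E)"
  then obtain xs where xs: "length xs \<ge> 3" "distinct xs" "set xs \<subseteq> K ` V" "is_walk (cluster_adj E) xs"
    "cluster_adj E (last xs) (hd xs)" unfolding has_cycle_def by blast
  define n where "n = length xs"
  have n3: "n \<ge> 3" using xs n_def by simp
  define nx where "nx j = (if j = n - 1 then 0 else Suc j)" for j
  have cyc: "cluster_adj E (xs ! j) (xs ! nx j)" if j: "j < n" for j
  proof (cases "j = n - 1")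
    case True
    have xne: "xs \<noteq> []" using n3 n_def by auto
    have "xs ! j = last xs" "xs ! nx j = hd xs"
      by (simp_all add: last_conv_nth[OF xne] hd_conv_nth[OF xne] True nx_def n_def)
    then show ?thesis using xs(5) by simp
  next
    case False
    then have "Suc j < n" "nx j = Suc j" using j nx_def by auto
    then show ?thesis using xs(4) n_def by (simp add: is_walk_def)
  qed
  have fin: "finite (lev ` set xs)" by simp
  have ne: "lev ` set xs \<noteq> {}" using n3 n_def by auto
  obtain c where c: "c \<in> set xs" "lev c = Max (lev ` set xs)" using Max_in[OF fin ne] by auto
  then obtain i where i: "i < n" "xs ! i = c" using n_def by (auto simp: in_set_conv_nth)
  define j1 where "j1 = nx i"
  define j2 where "j2 = (if i = 0 then n - 1 else i - 1)"
  have j: "j1 < n" "j2 < n" "j1 \<noteq> j2" using i n3 unfolding j1_def j2_def nx_def by auto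
  have nx2: "nx j2 = i" using i n3 unfolding j2_def nx_def by auto
  have a1: "cluster_adj E c (xs ! j1)" using cyc i j1_def by blast
  have a2: "cluster_adj E c (xs ! j2)" using cyc[of j2] j nx2 i adj_sym by auto
  have inV: "\<And>k. k < n \<Longrightarrow> xs ! k \<in> K ` V" using xs(3) n_def by (auto dest!: nth_mem)
  have le: "\<And>k. k < n \<Longrightarrow> lev (xs ! k) \<le> lev c" using c n_def fin by auto
  have "lev (xs ! j1) + 1 = lev c" using adj_lev[OF inV[OF i(1)] inV[OF j(1)]] a1 i le[OF j(1)] by auto
  moreover have "lev (xs ! j2) + 1 = lev c" using adj_lev[OF inV[OF i(1)] inV[OF j(2)]] a2 i le[OF j(2)] by auto
  ultimately have "xs ! j1 = xs ! j2"
    using uniq_parent[OF inV[OF i(1)] inV[OF j(1)] inV[OF j(2)]] a1 a2 i by auto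
  then show False using xs(2) j n_def by (simp add: nth_eq_iff_index_eq)
qed

end

theorem mainTheorem4:
  fixes V :: "'a set" and E :: "'a \<Rightarrow> 'a \<Rightarrow> bool" and v0 :: 'a
  assumes "finite V"
    and "simple_graph V E"
    and "connected_graph V E"
    and "weetman V E"
    and "v0 \<in> V"
  shows "is_tree (clusters V E v0) (cluster_adj E)"
proof -
  interpret WG V E v0 using assms by unfold_locales auto
  show ?thesis unfolding is_tree_def clusters_eq using connected_clusters no_cycle by simp
qed

end
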